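(* In the setting of the previous statement (sample space $\mathcal{X}\times\mathcal{Y}$, hypothesis set $\mathcal{H}$, learning algorithm $\mathcal{A}$ given by a Markov kernel $\mathcal{P}_{H|S}$, $S\sim\mathcal{P}^n$ i.i.d., $H=\mathcal{A}(S)$ with $\mathcal{P}_{SH}\ll\mathcal{P}_S\mathcal{P}_H$, $0$-$1$ loss, $\eta\in(0,1)$ and $E=\{(s,h):|L_{\mathcal{P}}(h)-L_s(h)|>\eta\}$), fix $\alpha>1$, let $\gamma=\frac{\alpha}{\alpha-1}$ and $\delta\in(0,1)$. If the number of samples $n$ satisfies $$n\ge\frac{I_\alpha(S;\mathcal{A}(S))+\log2+\gamma\log\left(\frac1\delta\right)}{2\eta^2},$$ then $\mathbb{P}((S,\mathcal{A}(S))\in E)\le\delta$.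
   Context: The $0$-$1$ loss is $\ell(h,(x,y))=\mathbb{1}_{h(x)\neq y}$; $L_{\mathcal{P}}(h)=\mathcal{P}(\{(x,y):h(x)\ne y\})$; for $s=((x_i,y_i))_{i=1}^n$, $L_s(h)=\frac1n\sum_{i=1}^n\mathbb{1}_{h(x_i)\ne y_i}$. Sibson's $\alpha$-mutual information is $I_\alpha(S;H)=\min_{Q_H}D_\alpha(\mathcal{P}_{SH}\|\mathcal{P}_SQ_H)$ with $D_\alpha(\mathcal{P}\|\mathcal{Q})=\frac{1}{\alpha-1}\ln\int p^\alpha q^{1-\alpha}d\mu$ the Rényi divergence. Logarithms are natural. *)

theory Defs
  imports "HOL-Probability.Probability"
begin

text \<open>Samples of size n are functions nat => 'x * 'y restricted to {..<n};
  the sample measure space is the n-fold product of the instance space.\<close>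

definition sample_space :: "nat \<Rightarrow> 'z measure \<Rightarrow> (nat \<Rightarrow> 'z) measure" where
  "sample_space n Z = PiM {..<n} (\<lambda>_. Z)"

definition iid_sample :: "nat \<Rightarrow> 'z measure \<Rightarrow> (nat \<Rightarrow> 'z) measure" where
  "iid_sample n P = PiM {..<n} (\<lambda>_. P)"

definition loss01 :: "('x \<Rightarrow> 'y) \<Rightarrow> 'x \<times> 'y \<Rightarrow> real" where
  "loss01 h z = (if h (fst z) \<noteq> snd z then 1 else 0)"

definition pop_risk :: "('x \<times> 'y) measure \<Rightarrow> ('x \<Rightarrow> 'y) \<Rightarrow> real" where
  "pop_risk P h = measure P {z \<in> space P. h (fst z) \<noteq> snd z}"

definition emp_risk :: "nat \<Rightarrow> (nat \<Rightarrow> 'x \<times> 'y) \<Rightarrow> ('x \<Rightarrow> 'y) \<Rightarrow> real" where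
  "emp_risk n s h = (\<Sum>i<n. loss01 h (s i)) / real n"

definition joint_dist ::
  "'s measure \<Rightarrow> ('s \<Rightarrow> 'h measure) \<Rightarrow> 'h measure \<Rightarrow> ('s \<times> 'h) measure" where
  "joint_dist PS K MH = PS \<bind> (\<lambda>s. distr (K s) (PS \<Otimes>\<^sub>M MH) (\<lambda>h. (s, h)))"

definition marginal_H :: "'s measure \<Rightarrow> ('s \<Rightarrow> 'h measure) \<Rightarrow> 'h measure" where
  "marginal_H PS K = PS \<bind> K"

text \<open>Renyi divergence D_alpha(M || N) of order alpha > 1:
  (1/(alpha-1)) ln \<integral> p^alpha q^(1-alpha) d\<mu>, which for alpha > 1 equals
  (1/(alpha-1)) ln \<integral> (dM/dN)^alpha dN if M << N and +\<infinity> otherwise.\<close>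
definition renyi_div :: "real \<Rightarrow> 'a measure \<Rightarrow> 'a measure \<Rightarrow> ereal" where
  "renyi_div \<alpha> M N =
     (let I = (\<integral>\<^sup>+ x. ennreal (enn2real (RN_deriv N M x) powr \<alpha>) \<partial>N)
      in if absolutely_continuous N M \<and> sets M = sets N \<and> I \<noteq> \<infinity>
         then ereal (ln (enn2real I) / (\<alpha> - 1)) else \<infinity>)"

definition sibson_MI :: "real \<Rightarrow> 's measure \<Rightarrow> 'h measure \<Rightarrow> ('s \<times> 'h) measure \<Rightarrow> ereal" where
  "sibson_MI \<alpha> PS MH PSH =
     (INF Q \<in> {Q. prob_space Q \<and> sets Q = sets MH}. renyi_div \<alpha> PSH (PS \<Otimes>\<^sub>M Q))"

end

theory Submission
  imports Defs
begin


lemma young_point: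
  fixes f A b K \<alpha> \<gamma> :: real
  assumes \<alpha>: "\<alpha> > 1" and \<gamma>: "\<gamma> = \<alpha> / (\<alpha> - 1)" and A: "A > 0" and b: "b > 0" and f: "f \<ge> 0"
    and K: "K = A powr (1/\<alpha>) * b powr (1/\<gamma>)"
  shows "f \<le> K / (\<alpha> * A) * f powr \<alpha> + K / (\<gamma> * b)"
proof -
  have \<gamma>1: "\<gamma> > 1" using \<alpha> by (simp add: \<gamma> field_simps)
  have sum1: "1/\<alpha> + 1/\<gamma> = 1" using \<alpha> by (simp add: \<gamma> field_simps)
  have Ap: "A powr (1/\<alpha>) > 0" and bp: "b powr (1/\<gamma>) > 0" using A b by auto
  have "(f / A powr (1/\<alpha>)) * (1 / b powr (1/\<gamma>))
      \<le> (f / A powr (1/\<alpha>)) powr \<alpha> / \<alpha> + (1 / b powr (1/\<gamma>)) powr \<gamma> / \<gamma>"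
    by (rule Youngs_inequality) (use \<alpha> \<gamma>1 sum1 f Ap bp in auto)
  also have "(f / A powr (1/\<alpha>)) powr \<alpha> = f powr \<alpha> / A"
    using f A \<alpha> by (simp add: powr_divide powr_powr)
  also have "(1 / b powr (1/\<gamma>)) powr \<gamma> = 1 / b"
    using b \<gamma>1 by (simp add: powr_divide powr_powr)
  finally have *: "f / K \<le> f powr \<alpha> / A / \<alpha> + 1 / b / \<gamma>"
    by (simp add: K field_simps)
  have Kp: "K > 0" using Ap bp K by simp
  from mult_left_mono[OF * less_imp_le[OF Kp]] Kp show ?thesis
    by (simp add: field_simps)
qed

lemma holder_bound:
  fixes J N :: "'a measure"
  assumes J: "prob_space J" and N: "prob_space N"
    and ac: "absolutely_continuous N J" and sets: "sets J = sets N"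
    and \<alpha>: "\<alpha> > 1"
    and Ifin: "(\<integral>\<^sup>+x. ennreal (enn2real (RN_deriv N J x) powr \<alpha>) \<partial>N) \<noteq> \<infinity>"
    and E: "E \<in> sets N" and pos: "measure J E > 0"
  shows "\<alpha>/(\<alpha>-1) * ln (measure J E)
           \<le> ln (enn2real (\<integral>\<^sup>+x. ennreal (enn2real (RN_deriv N J x) powr \<alpha>) \<partial>N)) / (\<alpha>-1)
              + ln (measure N E)"
proof -
  interpret J: prob_space J by fact
  interpret N: prob_space N by fact
  define Ii where "Ii = (\<integral>\<^sup>+x. ennreal (enn2real (RN_deriv N J x) powr \<alpha>) \<partial>N)"
  define f where "f x = enn2real (RN_deriv N J x)" for x
  define A where "A = enn2real Ii"
  define b where "b = measure N E"
  define \<gamma> where "\<gamma> = \<alpha> / (\<alpha> - 1)"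
  have fm[measurable]: "f \<in> borel_measurable N" unfolding f_def by measurable
  have f0: "f x \<ge> 0" for x by (simp add: f_def)
  have Ii_eq: "Ii = ennreal A" using Ifin by (simp add: A_def Ii_def ennreal_enn2real_if) 
  have EJ: "E \<in> sets J" using E sets by simp
  have JE: "emeasure J E = (\<integral>\<^sup>+x. ennreal (f x * indicator E x) \<partial>N)"
  proof -
    have "emeasure J E = (\<integral>\<^sup>+x. indicator E x \<partial>J)" using EJ by simp
    also have "\<dots> = (\<integral>\<^sup>+x. RN_deriv N J x * indicator E x \<partial>N)"
      by (rule N.RN_deriv_nn_integral[OF ac sets]) (use E in simp)
    also have "\<dots> = (\<integral>\<^sup>+x. ennreal (f x * indicator E x) \<partial>N)"
    proof (rule nn_integral_cong_AE)
      show "AE x in N. RN_deriv N J x * indicator E x = ennreal (f x * indicator E x)"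
        using N.RN_deriv_finite[OF J.sigma_finite_measure_axioms ac sets]
        by eventually_elim (auto simp: f_def indicator_def ennreal_enn2real_if)
    qed
    finally show ?thesis .
  qed
  have b0: "b > 0"
  proof (rule ccontr)
    assume "\<not> b > 0"
    hence "b = 0" using measure_nonneg[of N E] by (simp add: b_def)
    hence "emeasure N E = 0" using E by (simp add: b_def N.emeasure_eq_measure)
    hence "E \<in> null_sets N" using E by auto
    hence "E \<in> null_sets J" using ac by (auto simp: absolutely_continuous_def)
    hence "measure J E = 0" by (simp add: measure_def null_sets_def)
    thus False using pos by simp
  qed
  have A0: "A > 0"
  proof (rule ccontr)
    assume "\<not> A > 0"
    hence "A = 0" using A_def by (simp add: enn2real_nonneg leD less_le)
    hence "Ii = 0" using Ii_eq by simp
    hence "AE x in N. ennreal (f x powr \<alpha>) = 0"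
      unfolding Ii_def f_def by (subst (asm) nn_integral_0_iff_AE) auto
    hence "AE x in N. ennreal (f x * indicator E x) = 0"
      by eventually_elim (auto simp: indicator_def)
    moreover have "(\<lambda>x. ennreal (f x * indicator E x)) \<in> borel_measurable N" using E by measurable
    ultimately have "emeasure J E = 0" unfolding JE by (subst nn_integral_0_iff_AE) auto
    thus False using pos by (simp add: J.emeasure_eq_measure)
  qed
  define K where "K = A powr (1/\<alpha>) * b powr (1/\<gamma>)"
  have K0: "K > 0" using A0 b0 by (simp add: K_def)
  have "emeasure J E \<le> (\<integral>\<^sup>+x. ennreal (K / (\<alpha> * A)) * ennreal (f x powr \<alpha>)
                                   + ennreal (K / (\<gamma> * b)) * indicator E x \<partial>N)"
    unfolding JE
  proof (rule nn_integral_mono)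
    fix x
    have y: "f x \<le> K / (\<alpha> * A) * f x powr \<alpha> + K / (\<gamma> * b)"
      by (rule young_point[OF \<alpha> \<gamma>_def A0 b0 f0 K_def])
    show "ennreal (f x * indicator E x)
          \<le> ennreal (K / (\<alpha> * A)) * ennreal (f x powr \<alpha>) + ennreal (K / (\<gamma> * b)) * indicator E x"
    proof (cases "x \<in> E")
      case True
      have "ennreal (f x) \<le> ennreal (K / (\<alpha> * A) * f x powr \<alpha> + K / (\<gamma> * b))"
        using y by (rule ennreal_leI)
      also have "\<dots> = ennreal (K / (\<alpha> * A)) * ennreal (f x powr \<alpha>) + ennreal (K / (\<gamma> * b))"
        using K0 A0 b0 \<alpha> by (simp add: \<gamma>_def ennreal_plus[symmetric] ennreal_mult[symmetric] del: ennreal_plus)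
      finally show ?thesis using True by simp
    qed simp
  qed
  also have "\<dots> = ennreal (K / (\<alpha> * A)) * Ii + ennreal (K / (\<gamma> * b)) * emeasure N E"
    unfolding Ii_def f_def using E
    by (subst nn_integral_add) (auto simp: nn_integral_cmult)
  also have "\<dots> = ennreal (K / (\<alpha> * A) * A + K / (\<gamma> * b) * b)"
    using K0 A0 b0 \<alpha> Ii_eq
    by (simp add: b_def N.emeasure_eq_measure \<gamma>_def ennreal_plus[symmetric] ennreal_mult[symmetric] del: ennreal_plus)
  also have "K / (\<alpha> * A) * A + K / (\<gamma> * b) * b = K * (1/\<alpha> + 1/\<gamma>)"
    using A0 b0 by (simp add: field_simps)
  also have "1/\<alpha> + 1/\<gamma> = 1" using \<alpha> by (simp add: \<gamma>_def field_simps)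
  finally have "measure J E \<le> K"
    using K0 by (simp add: J.emeasure_eq_measure)
  hence "ln (measure J E) \<le> ln K" using pos by simp
  also have "ln K = (1/\<alpha>) * ln A + (1/\<gamma>) * ln b"
    using A0 b0 by (simp add: K_def ln_mult ln_powr)
  finally have "\<gamma> * ln (measure J E) \<le> \<gamma> * ((1/\<alpha>) * ln A + (1/\<gamma>) * ln b)"
    using \<alpha> by (intro mult_left_mono) (auto simp: \<gamma>_def)
  also have "\<dots> = ln A / (\<alpha> - 1) + ln b"
    using \<alpha> by (simp add: \<gamma>_def field_simps)
  finally show ?thesis by (simp add: \<gamma>_def A_def Ii_def b_def)
qed



lemma indep_components:
  assumes P: "prob_space P" and n: "(n::nat) > 0"
  shows "prob_space.indep_vars (PiM {..<n} (\<lambda>_. P)) (\<lambda>_. P) (\<lambda>i s. s i) {..<n}"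
proof -
  let ?PS = "PiM {..<n} (\<lambda>_. P)"
  interpret PS: prob_space ?PS by (intro prob_space_PiM P)
  show ?thesis
  proof (subst PS.indep_vars_iff_distr_eq_PiM')
    show "{..<n} \<noteq> {}" using n by auto
    show "\<And>i. i \<in> {..<n} \<Longrightarrow> (\<lambda>s. s i) \<in> measurable ?PS P" by (rule measurable_component_singleton[where M="\<lambda>_. P"]) auto
    have "distr ?PS (PiM {..<n} (\<lambda>_. P)) (\<lambda>x. \<lambda>i\<in>{..<n}. x i) = distr ?PS ?PS (\<lambda>x. x)"
      by (intro distr_cong) (auto simp: space_PiM PiE_def extensional_restrict)
    also have "\<dots> = ?PS" by simp
    also have "\<dots> = PiM {..<n} (\<lambda>i. distr ?PS P (\<lambda>x. x i))"
      by (intro PiM_cong refl distr_PiM_component[symmetric] P) auto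
    finally show "distr ?PS (PiM {..<n} (\<lambda>_. P)) (\<lambda>x. \<lambda>i\<in>{..<n}. x i) = PiM {..<n} (\<lambda>i. distr ?PS P (\<lambda>x. x i))" .
  qed
qed

lemma hoeffding_h:
  assumes P: "prob_space P" and C: "{z \<in> space P. h (fst z) \<noteq> snd z} \<in> sets P"
    and \<eta>: "\<eta> \<ge> 0"
  shows "measure (iid_sample n P) {s \<in> space (iid_sample n P). \<eta> < \<bar>pop_risk P h - emp_risk n s h\<bar>}
          \<le> 2 * exp (-2 * real n * \<eta>\<^sup>2)"
proof (cases "n = 0")
  case True
  interpret PS: prob_space "iid_sample n P" unfolding iid_sample_def by (intro prob_space_PiM P)
  have "measure (iid_sample n P) {s \<in> space (iid_sample n P). \<eta> < \<bar>pop_risk P h - emp_risk n s h\<bar>} \<le> 1"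
    by simp
  then show ?thesis using True by simp
next
  case False
  hence n: "n > 0" by simp
  let ?C = "{z \<in> space P. h (fst z) \<noteq> snd z}"
  define PS where "PS = PiM {..<n} (\<lambda>_. P)"
  interpret PS: prob_space PS unfolding PS_def by (intro prob_space_PiM P)
  define g where "g = loss01 h"
  have g_ind: "z \<in> space P \<Longrightarrow> g z = indicator ?C z" for z
    by (auto simp: g_def loss01_def indicator_def)
  have g_meas[measurable]: "g \<in> borel_measurable P"
    by (rule measurable_cong[THEN iffD2, OF g_ind]) (auto intro: borel_measurable_indicator C)
  define X where "X = (\<lambda>(i::nat) (s::nat \<Rightarrow> _). g (s i))"
  define Y where "Y = X 0"
  have Xm[measurable]: "i \<in> {..<n} \<Longrightarrow> X i \<in> borel_measurable PS" for i
    unfolding X_def PS_def by measurable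
  have distrX: "i \<in> {..<n} \<Longrightarrow> distr PS borel (X i) = distr P borel g" for i
  proof -
    assume i: "i \<in> {..<n}"
    have "distr PS borel (X i) = distr (distr PS P (\<lambda>s. s i)) borel g"
      unfolding X_def PS_def using i by (subst distr_distr) (auto simp: comp_def intro!: measurable_component_singleton)
    also have "distr PS P (\<lambda>s. s i) = P" unfolding PS_def by (intro distr_PiM_component P i)
    finally show ?thesis .
  qed
  have indep: "PS.indep_vars (\<lambda>_. borel) X {..<n}"
    unfolding X_def
    by (rule PS.indep_vars_compose2[OF indep_components[OF P n, folded PS_def]]) simp
  interpret H: Hoeffding_ineq_iid PS "{..<n}" X Y 0 1 "PS.expectation Y"
  proof unfold_locales
    show "finite {..<n}" by simp
    show "PS.indep_vars (\<lambda>_. borel) X {..<n}" by (rule indep)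
    show "\<And>i. i \<in> {..<n} \<Longrightarrow> distr PS borel (X i) = distr PS borel Y"
      unfolding Y_def using distrX n by simp
    show "Y \<in> borel_measurable PS" unfolding Y_def by (rule Xm) (use n in auto)
    show "AE x in PS. Y x \<in> {0..1}"
      by (auto simp: Y_def X_def g_def loss01_def)
  qed simp
  have mu: "PS.expectation Y = pop_risk P h"
  proof -
    have "PS.expectation Y = integral\<^sup>L (distr PS P (\<lambda>s. s 0)) g"
      unfolding Y_def X_def PS_def using n by (subst integral_distr) auto
    also have "distr PS P (\<lambda>s. s 0) = P" unfolding PS_def using n by (intro distr_PiM_component P) auto
    also have "integral\<^sup>L P g = integral\<^sup>L P (indicator ?C)"
      by (intro Bochner_Integration.integral_cong refl g_ind)
    also have "\<dots> = pop_risk P h" by (simp add: pop_risk_def Int_absorb2)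
    finally show ?thesis .
  qed
  have Xsum[measurable]: "(\<lambda>x. \<Sum>i\<in>{..<n}. X i x) \<in> borel_measurable PS"
    by (intro borel_measurable_sum Xm)
  have "measure PS {s \<in> space PS. \<eta> < \<bar>pop_risk P h - emp_risk n s h\<bar>}
      \<le> measure PS {x\<in>space PS. \<bar>(\<Sum>i\<in>{..<n}. X i x) / real (card {..<n}) - PS.expectation Y\<bar> \<ge> \<eta>}"
    by (intro PS.finite_measure_mono, force simp: mu emp_risk_def X_def g_def, measurable)
  also have "\<dots> \<le> 2 * exp (-2 * real (card {..<n}) * \<eta>\<^sup>2 / (1 - 0)\<^sup>2)"
    by (rule H.Hoeffding_ineq_abs_ge'[OF \<eta>]) (use n in auto)
  finally show ?thesis by (simp add: PS_def iid_sample_def)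
qed



lemma ac_pos:
  assumes ac: "absolutely_continuous N J" and E: "E \<in> sets N" and pos: "measure J E > 0"
    and fin: "finite_measure N"
  shows "measure N E > 0"
proof (rule ccontr)
  interpret finite_measure N by fact
  assume "\<not> measure N E > 0"
  hence "measure N E = 0" using measure_nonneg[of N E] by simp
  hence "emeasure N E = 0" using E by (simp add: emeasure_eq_measure)
  hence "E \<in> null_sets N" using E by auto
  hence "E \<in> null_sets J" using ac by (auto simp: absolutely_continuous_def)
  hence "measure J E = 0" by (simp add: measure_def null_sets_def)
  thus False using pos by simp
qed

theorem corollary5:
  fixes MX :: "'x measure" and MY :: "'y measure"
    and P :: "('x \<times> 'y) measure"
    and MH :: "('x \<Rightarrow> 'y) measure"
    and K :: "(nat \<Rightarrow> 'x \<times> 'y) \<Rightarrow> ('x \<Rightarrow> 'y) measure"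
    and n :: nat and \<eta> \<alpha> \<gamma> \<delta> :: real
  assumes P: "prob_space P" "sets P = sets (MX \<Otimes>\<^sub>M MY)"
    and loss_meas: "{(h, z) \<in> space (MH \<Otimes>\<^sub>M (MX \<Otimes>\<^sub>M MY)). h (fst z) \<noteq> snd z}
                      \<in> sets (MH \<Otimes>\<^sub>M (MX \<Otimes>\<^sub>M MY))"
    and K: "K \<in> sample_space n (MX \<Otimes>\<^sub>M MY) \<rightarrow>\<^sub>M prob_algebra MH"
    and ac: "absolutely_continuous (iid_sample n P \<Otimes>\<^sub>M marginal_H (iid_sample n P) K)
                                   (joint_dist (iid_sample n P) K MH)"
    and \<eta>: "0 < \<eta>" "\<eta> < 1"
    and \<alpha>: "\<alpha> > 1" and \<gamma>: "\<gamma> = \<alpha> / (\<alpha> - 1)"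
    and \<delta>: "0 < \<delta>" "\<delta> < 1"
    and n_bound: "ereal (real n) \<ge>
       (sibson_MI \<alpha> (iid_sample n P) MH (joint_dist (iid_sample n P) K MH)
          + ereal (ln 2 + \<gamma> * ln (1 / \<delta>))) / ereal (2 * \<eta>\<^sup>2)"
  shows "measure (joint_dist (iid_sample n P) K MH)
           {(s, h) \<in> space (sample_space n (MX \<Otimes>\<^sub>M MY) \<Otimes>\<^sub>M MH).
              \<bar>pop_risk P h - emp_risk n s h\<bar> > \<eta>} \<le> \<delta>"
proof -
  define SS where "SS = sample_space n (MX \<Otimes>\<^sub>M MY)"
  define PS where "PS = iid_sample n P"
  define J where "J = joint_dist PS K MH"
  define L where "L = {(h, z) \<in> space (MH \<Otimes>\<^sub>M (MX \<Otimes>\<^sub>M MY)). h (fst z) \<noteq> snd z}"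
  define E where "E = {(s, h) \<in> space (SS \<Otimes>\<^sub>M MH). \<bar>pop_risk P h - emp_risk n s h\<bar> > \<eta>}"
  have L[measurable]: "L \<in> sets (MH \<Otimes>\<^sub>M (MX \<Otimes>\<^sub>M MY))" using loss_meas by (simp add: L_def)
  have spP: "space P = space (MX \<Otimes>\<^sub>M MY)" using P(2) by (rule sets_eq_imp_space_eq)
  have setsPS: "sets PS = sets SS"
    unfolding PS_def SS_def iid_sample_def sample_space_def by (intro sets_PiM_cong P refl)
  have spPS: "space PS = space SS" using setsPS by (rule sets_eq_imp_space_eq)
  interpret PS: prob_space PS unfolding PS_def iid_sample_def by (intro prob_space_PiM P)
  have KPS: "K \<in> PS \<rightarrow>\<^sub>M prob_algebra MH"
    using K by (simp add: SS_def[symmetric] measurable_cong_sets[OF setsPS refl])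
  define ker where "ker = (\<lambda>s. distr (K s) (PS \<Otimes>\<^sub>M MH) (\<lambda>h. (s, h)))"
  have ker: "ker \<in> PS \<rightarrow>\<^sub>M prob_algebra (PS \<Otimes>\<^sub>M MH)"
  proof (rule measurable_prob_algebraI)
    fix s assume s: "s \<in> space PS"
    have "K s \<in> space (prob_algebra MH)" using KPS s by (rule measurable_space)
    hence "prob_space (K s)" "sets (K s) = sets MH" by (auto simp: space_prob_algebra)
    moreover have "(\<lambda>h. (s, h)) \<in> MH \<rightarrow>\<^sub>M PS \<Otimes>\<^sub>M MH" using s by measurable
    ultimately have "(\<lambda>h. (s, h)) \<in> K s \<rightarrow>\<^sub>M PS \<Otimes>\<^sub>M MH"
      using measurable_cong_sets[of "K s" MH "PS \<Otimes>\<^sub>M MH" "PS \<Otimes>\<^sub>M MH"] by simp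
    with \<open>prob_space (K s)\<close> show "prob_space (ker s)" unfolding ker_def
      by (intro prob_space.prob_space_distr)
  next
    show "ker \<in> PS \<rightarrow>\<^sub>M subprob_algebra (PS \<Otimes>\<^sub>M MH)"
      unfolding ker_def
      by (rule measurable_distr2[where M=MH]) (auto intro: measurable_prob_algebraD[OF KPS])
  qed
  have PSpa: "PS \<in> space (prob_algebra PS)" by (simp add: space_prob_algebra PS.prob_space_axioms)
  have Jeq: "J = PS \<bind> ker" by (simp add: J_def joint_dist_def ker_def)
  have Jprob: "prob_space J" unfolding Jeq by (rule prob_space_bind'[OF PSpa ker])
  have setsJ: "sets J = sets (PS \<Otimes>\<^sub>M MH)" unfolding Jeq by (rule sets_bind'[OF PSpa ker])
  have popm[measurable]: "(\<lambda>h. pop_risk P h) \<in> borel_measurable MH"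
  proof -
    interpret Pp: prob_space P by (rule P(1))
    have L': "L \<in> sets (MH \<Otimes>\<^sub>M P)" using L by (simp add: P(2))
    have "(\<lambda>h. enn2real (emeasure P (Pair h -` L))) \<in> borel_measurable MH"
      by (intro borel_measurable_enn2real Pp.measurable_emeasure_Pair L')
    moreover have "h \<in> space MH \<Longrightarrow> pop_risk P h = enn2real (emeasure P (Pair h -` L))" for h
      by (simp add: pop_risk_def measure_def L_def space_pair_measure spP)
    ultimately show ?thesis by (subst measurable_cong) auto
  qed
  have ind_m: "i < n \<Longrightarrow> (\<lambda>x. indicator L (snd x, fst x i) :: real) \<in> borel_measurable (SS \<Otimes>\<^sub>M MH)" for i
    unfolding SS_def sample_space_def by measurable
  have empm: "(\<lambda>x. (\<Sum>i<n. indicator L (snd x, fst x i)) / real n :: real) \<in> borel_measurable (SS \<Otimes>\<^sub>M MH)"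
    using ind_m by measurable
  have emp_eq: "x \<in> space (SS \<Otimes>\<^sub>M MH) \<Longrightarrow> emp_risk n (fst x) (snd x) = (\<Sum>i<n. indicator L (snd x, fst x i)) / real n" for x
  proof -
    assume x: "x \<in> space (SS \<Otimes>\<^sub>M MH)"
    have "i < n \<Longrightarrow> loss01 (snd x) (fst x i) = indicator L (snd x, fst x i)" for i
    proof -
      assume i: "i < n"
      have x12: "fst x \<in> space SS" "snd x \<in> space MH" using x by (simp_all add: space_pair_measure mem_Times_iff)
      have "fst x i \<in> space (MX \<Otimes>\<^sub>M MY)"
        using x12(1) i by (simp add: SS_def sample_space_def space_PiM PiE_iff)
      note this x12(2)
      thus ?thesis by (auto simp: loss01_def L_def indicator_def space_pair_measure)
    qed
    thus ?thesis by (simp add: emp_risk_def)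
  qed
  have gm: "(\<lambda>x. \<bar>pop_risk P (snd x) - emp_risk n (fst x) (snd x)\<bar>) \<in> borel_measurable (SS \<Otimes>\<^sub>M MH)"
  proof -
    have "(\<lambda>x. \<bar>pop_risk P (snd x) - (\<Sum>i<n. indicator L (snd x, fst x i)) / real n\<bar>) \<in> borel_measurable (SS \<Otimes>\<^sub>M MH)"
      using empm by measurable
    then show ?thesis by (rule measurable_cong[THEN iffD2, rotated]) (simp add: emp_eq)
  qed
  have E_sets: "E \<in> sets (SS \<Otimes>\<^sub>M MH)"
  proof -
    have "{x \<in> space (SS \<Otimes>\<^sub>M MH). (\<lambda>_. \<eta>) x < \<bar>pop_risk P (snd x) - emp_risk n (fst x) (snd x)\<bar>} \<in> sets (SS \<Otimes>\<^sub>M MH)"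
      by (intro borel_measurable_less gm) simp
    also have "{x \<in> space (SS \<Otimes>\<^sub>M MH). (\<lambda>_. \<eta>) x < \<bar>pop_risk P (snd x) - emp_risk n (fst x) (snd x)\<bar>} = E"
      by (auto simp: E_def)
    finally show ?thesis .
  qed
  have setsPSMH: "sets (PS \<Otimes>\<^sub>M MH) = sets (SS \<Otimes>\<^sub>M MH)" using setsPS by (intro sets_pair_measure_cong) auto
  show ?thesis
  proof (cases "measure J E > 0")
    case False
    hence "measure J E = 0" using measure_nonneg[of J E] by simp
    thus ?thesis using \<delta> by (simp add: J_def E_def SS_def PS_def)
  next
    case pos: True
    have key: "ereal (\<gamma> * ln (measure J E) - ln 2 + 2 * real n * \<eta>\<^sup>2) \<le> sibson_MI \<alpha> PS MH J"
      unfolding sibson_MI_def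
    proof (rule INF_greatest)
      fix Q assume "Q \<in> {Q. prob_space Q \<and> sets Q = sets MH}"
      hence Q: "prob_space Q" "sets Q = sets MH" by auto
      interpret Q: prob_space Q by (rule Q(1))
      interpret PQ: pair_sigma_finite PS Q ..
      define N where "N = PS \<Otimes>\<^sub>M Q"
      have Nprob: "prob_space N" unfolding N_def by (intro prob_space_pair Q(1) PS.prob_space_axioms)
      interpret Np: prob_space N by (rule Nprob)
      have setsN: "sets N = sets (SS \<Otimes>\<^sub>M MH)" unfolding N_def using setsPS Q(2) by (intro sets_pair_measure_cong)
      have EN: "E \<in> sets N" using E_sets setsN by simp
      show "ereal (\<gamma> * ln (measure J E) - ln 2 + 2 * real n * \<eta>\<^sup>2) \<le> renyi_div \<alpha> J (PS \<Otimes>\<^sub>M Q)"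
      proof (cases "absolutely_continuous N J \<and> sets J = sets N \<and>
                    (\<integral>\<^sup>+x. ennreal (enn2real (RN_deriv N J x) powr \<alpha>) \<partial>N) \<noteq> \<infinity>")
        case False
        have "renyi_div \<alpha> J N = \<infinity>" unfolding renyi_div_def Let_def
          by (rule if_not_P[OF False])
        thus ?thesis by (simp add: N_def)
      next
        case True
        hence acN: "absolutely_continuous N J" and sJ: "sets J = sets N"
          and Ifin: "(\<integral>\<^sup>+x. ennreal (enn2real (RN_deriv N J x) powr \<alpha>) \<partial>N) \<noteq> \<infinity>" by auto
        have hol: "\<gamma> * ln (measure J E)
           \<le> ln (enn2real (\<integral>\<^sup>+x. ennreal (enn2real (RN_deriv N J x) powr \<alpha>) \<partial>N)) / (\<alpha>-1) + ln (measure N E)"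
          unfolding \<gamma> by (rule holder_bound[OF Jprob Nprob acN sJ \<alpha> Ifin EN pos])
        have Npos: "measure N E > 0"
          by (rule ac_pos[OF acN EN pos]) (use Nprob in \<open>simp add: prob_space_def\<close>)
        have hoef: "measure N E \<le> 2 * exp (-2 * real n * \<eta>\<^sup>2)"
        proof -
          have "emeasure N E = (\<integral>\<^sup>+h. emeasure PS ((\<lambda>s. (s, h)) -` E) \<partial>Q)"
            unfolding N_def by (rule PQ.emeasure_pair_measure_alt2) (use EN in \<open>simp add: N_def\<close>)
          also have "\<dots> \<le> (\<integral>\<^sup>+h. ennreal (2 * exp (-2 * real n * \<eta>\<^sup>2)) \<partial>Q)"
          proof (rule nn_integral_mono)
            fix h assume h: "h \<in> space Q"
            hence hMH: "h \<in> space MH" using Q(2) sets_eq_imp_space_eq by blast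
            have C: "{z \<in> space P. h (fst z) \<noteq> snd z} \<in> sets P"
            proof -
              have "Pair h -` L \<in> sets (MX \<Otimes>\<^sub>M MY)" using L by (rule sets_Pair1)
              also have "Pair h -` L = {z \<in> space P. h (fst z) \<noteq> snd z}"
                using hMH unfolding L_def space_pair_measure[of MH "MX \<Otimes>\<^sub>M MY"] spP by blast
              finally show ?thesis using P(2) by simp
            qed
            have "(\<lambda>s. (s, h)) -` E = {s \<in> space PS. \<eta> < \<bar>pop_risk P h - emp_risk n s h\<bar>}"
              using hMH unfolding E_def space_pair_measure[of SS MH] spPS by blast
            hence "emeasure PS ((\<lambda>s. (s, h)) -` E) = ennreal (measure PS {s \<in> space PS. \<eta> < \<bar>pop_risk P h - emp_risk n s h\<bar>})"
              by (simp add: PS.emeasure_eq_measure)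
            also have "\<dots> \<le> ennreal (2 * exp (-2 * real n * \<eta>\<^sup>2))"
              using hoeffding_h[OF P(1) C, of \<eta> n] \<eta> by (intro ennreal_leI) (simp add: PS_def)
            finally show "emeasure PS ((\<lambda>s. (s, h)) -` E) \<le> ennreal (2 * exp (-2 * real n * \<eta>\<^sup>2))" .
          qed
          also have "\<dots> = ennreal (2 * exp (-2 * real n * \<eta>\<^sup>2))" by (simp add: Q.emeasure_space_1)
          finally show ?thesis
            by (simp add: Np.emeasure_eq_measure)
        qed
        have "ln (measure N E) \<le> ln (2 * exp (-2 * real n * \<eta>\<^sup>2))"
          using Npos hoef by simp
        also have "\<dots> = ln 2 - 2 * real n * \<eta>\<^sup>2" by (simp add: ln_mult)
        finally have "\<gamma> * ln (measure J E) - ln 2 + 2 * real n * \<eta>\<^sup>2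
            \<le> ln (enn2real (\<integral>\<^sup>+x. ennreal (enn2real (RN_deriv N J x) powr \<alpha>) \<partial>N)) / (\<alpha>-1)"
          using hol by simp
        then show ?thesis using True by (simp add: renyi_div_def N_def[symmetric] Let_def)
      qed
    qed
    define c where "c = \<gamma> * ln (measure J E) - ln 2 + 2 * real n * \<eta>\<^sup>2"
    define I where "I = sibson_MI \<alpha> PS MH J"
    have key': "ereal c \<le> I" using key by (simp add: c_def I_def)
    have nb: "ereal (real n) \<ge> (I + ereal (ln 2 + \<gamma> * ln (1 / \<delta>))) / ereal (2 * \<eta>\<^sup>2)"
      using n_bound by (simp add: I_def PS_def J_def)
    have e2: "2 * \<eta>\<^sup>2 > 0" using \<eta> by simp
    obtain r where r: "I = ereal r"
    proof (cases I)
      case PInf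
      then show ?thesis using nb e2 by simp
    next
      case MInf
      then show ?thesis using key' by simp
    qed
    have rc: "c \<le> r" using key' r by simp
    have "real n \<ge> (r + (ln 2 + \<gamma> * ln (1 / \<delta>))) / (2 * \<eta>\<^sup>2)"
      using nb e2 by (simp add: r)
    hence "2 * \<eta>\<^sup>2 * real n \<ge> r + (ln 2 + \<gamma> * ln (1 / \<delta>))"
      using e2 by (simp add: field_simps)
    hence "\<gamma> * (ln (measure J E) + ln (1/\<delta>)) \<le> 0"
      using rc by (simp add: c_def algebra_simps)
    moreover have "\<gamma> > 0" using \<alpha> by (simp add: \<gamma>)
    ultimately have "ln (measure J E) + ln (1/\<delta>) \<le> 0"
      by (simp add: mult_le_0_iff)
    hence "ln (measure J E) \<le> ln \<delta>" using \<delta> by (simp add: ln_div)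
    hence "measure J E \<le> \<delta>" using pos \<delta> by simp
    thus ?thesis by (simp add: J_def E_def SS_def PS_def)
  qed
qed

end
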